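(* Let $m\ge 1$ and $r\ge 0$ be integers, let $n$ be a positive integer and let $x$ be a real number. Then \[ {\sum}^{2r}(x+n)^{2m}=\sum_{k=1}^m T(2m,2k)\left\{\frac{(x+n+r)(x+n+k+2r-1)_{2k+2r-1}}{(2k+2r)_{2r}}-\sum_{i=1}^{2r}\binom{n+2r-i-1}{2r-i}\frac{(2x+i)(x+k+i-1)_{2k+i-1}}{2(2k+i)_i}\right\}. \]
   Context: $(y)_k=y(y-1)\cdots(y-k+1)$ is the lower factorial ($(y)_0=1$). The $r$-fold sum is defined by ${\sum}^0 f(n)=f(n)$ and ${\sum}^r f(n)={\sum}^{r-1}f(1)+{\sum}^{r-1}f(2)+\cdots+{\sum}^{r-1}f(n)$; equivalently ${\sum}^r f(n)=\sum_{1\le i_1\le\cdots\le i_r\le n} f(i_1)$, here with $f(n)=(x+n)^{2m}$. The central factorials are $y^{[k]}=y\,(y+k/2-1)_{k-1}$ for $k\ge1$, and the central factorial numbers $T(m,k)$ are the coefficients determined by $y^m=\sum_{k=1}^m T(m,k)\,y^{[k]}$ for all $y$ and $m\ge 1$. *)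

theory Defs
  imports Complex_Main
begin

definition lfact :: "real \<Rightarrow> nat \<Rightarrow> real" where
  "lfact y k = (\<Prod>i<k. y - real i)"

fun rsum :: "nat \<Rightarrow> (nat \<Rightarrow> real) \<Rightarrow> nat \<Rightarrow> real" where
  "rsum 0 f n = f n"
| "rsum (Suc r) f n = (\<Sum>j=1..n. rsum r f j)"

definition cfact :: "real \<Rightarrow> nat \<Rightarrow> real" where
  "cfact y k = y * lfact (y + real k / 2 - 1) (k - 1)"

definition cfnum :: "nat \<Rightarrow> nat \<Rightarrow> real" where
  "cfnum m = (THE c. (\<forall>y::real. y ^ m = (\<Sum>k=1..m. c k * cfact y k))
                     \<and> (\<forall>k. (k = 0 \<or> k > m) \<longrightarrow> c k = 0))"

end

theory Submission
  imports Defs "HOL-Computational_Algebra.Polynomial"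
begin


lemma lfact_Suc: "lfact a (Suc k) = lfact a k * (a - real k)"
  by (simp add: lfact_def)

lemma lfact_Suc_shift: "lfact a (Suc k) = a * lfact (a - 1) k"
  unfolding lfact_def prod.lessThan_Suc_shift by (simp add: algebra_simps)

lemma cfact_Suc: "cfact y (Suc L) = y * lfact (y + real (Suc L)/2 - 1) L"
  by (simp add: cfact_def)

lemma cdiff: "cfact (y + 1/2) (Suc (Suc L)) - cfact (y - 1/2) (Suc (Suc L)) = real (Suc (Suc L)) * cfact y (Suc L)"
proof -
  define P where "P = lfact (y + real (Suc L)/2 - 1) L"
  have e1: "y + 1/2 + real (Suc (Suc L))/2 - 1 = y + real (Suc L)/2" by simp
  have e2: "y - 1/2 + real (Suc (Suc L))/2 - 1 = y + real (Suc L)/2 - 1" by simp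
  have 1: "cfact (y + 1/2) (Suc (Suc L)) = (y+1/2) * ((y + real (Suc L)/2) * P)"
    unfolding cfact_Suc e1 lfact_Suc_shift P_def ..
  have 2: "cfact (y - 1/2) (Suc (Suc L)) = (y-1/2) * (P * (y + real (Suc L)/2 - 1 - real L))"
    unfolding cfact_Suc e2 lfact_Suc P_def ..
  have 3: "cfact y (Suc L) = y * P" unfolding cfact_Suc P_def ..
  show ?thesis unfolding 1 2 3 by (simp add: field_simps)
qed

lemma cstep: "y^2 * cfact y (Suc L) = cfact y (Suc L + 2) + (real (Suc L))^2/4 * cfact y (Suc L)"
proof -
  define P where "P = lfact (y + real (Suc L)/2 - 1) L"
  have a: "y + real (Suc (Suc (Suc L)))/2 - 1 = y + real (Suc L)/2" by simp
  have b: "y + real (Suc L)/2 - 1 = y + real (Suc L)/2 - 1" ..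
  have 1: "cfact y (Suc (Suc (Suc L))) = y * ((y + real (Suc L)/2) * (P * (y + real (Suc L)/2 - 1 - real L)))"
    unfolding cfact_Suc a by (subst lfact_Suc_shift, subst lfact_Suc, simp add: P_def)
  have 3: "cfact y (Suc L) = y * P" unfolding cfact_Suc P_def ..
  have e: "Suc L + 2 = Suc (Suc (Suc L))" by simp
  show ?thesis unfolding e 1 3 by (simp add: field_simps power2_eq_square)
qed

lemma telescope: "(\<Sum>j=1..n. cfact (a + real j) (Suc L)) =
   (cfact (a + real n + 1/2) (Suc (Suc L)) - cfact (a + 1/2) (Suc (Suc L))) / real (Suc (Suc L))"
proof (induction n)
  case 0 then show ?case by simp
next
  case (Suc n)
  have "cfact (a + real (Suc n) + 1/2) (Suc (Suc L)) - cfact (a + real n + 1/2) (Suc (Suc L))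
     = real (Suc (Suc L)) * cfact (a + real (Suc n)) (Suc L)"
    using cdiff[of "a + real (Suc n)" L] by (simp add: algebra_simps)
  then show ?case using Suc by (simp add: field_simps del: of_nat_Suc)
qed

lemma hockey: "(\<Sum>j=1..n. (j - 1 + a) choose a) = (n + a) choose (Suc a)"
  by (induction n) (auto simp: add.commute)

lemma rsum_lin: "finite A \<Longrightarrow> rsum r (\<lambda>j. \<Sum>k\<in>A. c k * f k j) n = (\<Sum>k\<in>A. c k * rsum r (f k) n)"
  proof (induction r arbitrary: n)
  case 0 then show ?case by simp
next
  case (Suc r n)
  have "rsum (Suc r) (\<lambda>j. \<Sum>k\<in>A. c k * f k j) n = (\<Sum>j=1..n. \<Sum>k\<in>A. c k * rsum r (f k) j)"
    using Suc by simp
  also have "... = (\<Sum>k\<in>A. \<Sum>j=1..n. c k * rsum r (f k) j)" by (rule sum.swap)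
  finally show ?case by (simp add: sum_distrib_left)
qed

lemma hockey2: "i \<le> s \<Longrightarrow> (\<Sum>j=1..n. real ((j + s - i - 1) choose (s - i))) = real ((n + Suc s - i - 1) choose (Suc s - i))"
proof -
  assume "i \<le> s"
  have "(\<Sum>j=1..n. (j + s - i - 1) choose (s - i)) = (\<Sum>j=1..n. (j - 1 + (s - i)) choose (s - i))"
    by (rule sum.cong) (use \<open>i \<le> s\<close> in auto)
  also have "... = (n + (s - i)) choose Suc (s - i)" by (rule hockey)
  also have "... = (n + Suc s - i - 1) choose (Suc s - i)"
    using \<open>i \<le> s\<close> by (simp add: Suc_diff_le)
  finally show ?thesis by (metis of_nat_sum)
qed

lemma G: "n \<ge> 1 \<Longrightarrow> rsum s (\<lambda>j. cfact (x + real j) (Suc L)) n =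
   cfact (x + real n + real s/2) (Suc L + s) / lfact (real (Suc L + s)) s
   - (\<Sum>i=1..s. real ((n + s - i - 1) choose (s - i)) *
        (cfact (x + real i/2) (Suc L + i) / lfact (real (Suc L + i)) i))"
proof (induction s arbitrary: n)
  case 0 then show ?case by (simp add: lfact_def)
next
  case (Suc s n)
  define B where "B i = cfact (x + real i/2) (Suc L + i) / lfact (real (Suc L + i)) i" for i
  define A where "A j = cfact (x + real s/2 + real j) (Suc (L + s)) / lfact (real (Suc L + s)) s" for j
  have "rsum (Suc s) (\<lambda>j. cfact (x + real j) (Suc L)) n
      = (\<Sum>j=1..n. A j - (\<Sum>i=1..s. real ((j + s - i - 1) choose (s - i)) * B i))"
    unfolding rsum.simps
  proof (rule sum.cong)
    fix j assume "j \<in> {1..n}"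
    then have "j \<ge> 1" by simp
    have e: "x + real j + real s/2 = x + real s/2 + real j" by simp
    show "rsum s (\<lambda>j. cfact (x + real j) (Suc L)) j = A j - (\<Sum>i=1..s. real ((j + s - i - 1) choose (s - i)) * B i)"
      unfolding Suc.IH[OF \<open>j \<ge> 1\<close>] A_def B_def e by simp
  qed simp
  also have "... = (\<Sum>j=1..n. A j) - (\<Sum>i=1..s. (\<Sum>j=1..n. real ((j + s - i - 1) choose (s - i))) * B i)"
    by (simp only: sum_subtractf sum_distrib_right, subst sum.swap, rule refl)
  also have "(\<Sum>i=1..s. (\<Sum>j=1..n. real ((j + s - i - 1) choose (s - i))) * B i)
      = (\<Sum>i=1..s. real ((n + Suc s - i - 1) choose (Suc s - i)) * B i)"
    by (rule sum.cong[OF refl], subst hockey2, simp_all)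
  also have "(\<Sum>j=1..n. A j) = (cfact (x + real s/2 + real n + 1/2) (Suc (Suc (L + s)))
       - cfact (x + real s/2 + 1/2) (Suc (Suc (L + s)))) / real (Suc (Suc (L + s))) / lfact (real (Suc L + s)) s"
    unfolding A_def sum_divide_distrib[symmetric] telescope ..
  also have "... = cfact (x + real n + real (Suc s)/2) (Suc L + Suc s) / lfact (real (Suc L + Suc s)) (Suc s)
       - B (Suc s)"
  proof -
    have l: "lfact (real (Suc (Suc (L + s)))) (Suc s) = real (Suc (Suc (L + s))) * lfact (real (Suc L + s)) s"
      by (subst lfact_Suc_shift) simp
    have a1: "x + real s/2 + real n + 1/2 = x + real n + real (Suc s)/2" by simp
    have a2: "x + real s/2 + 1/2 = x + real (Suc s)/2" by simp
    have k: "Suc L + Suc s = Suc (Suc (L + s))" by simp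
    show ?thesis unfolding B_def k l a1 a2 by (simp add: diff_divide_distrib)
  qed
  finally show ?case
    using Suc.prems by (simp add: B_def)
qed


fun tc :: "nat \<Rightarrow> nat \<Rightarrow> real" where
  "tc 0 k = (if k = 1 then 1 else 0)"
| "tc (Suc m) k = (if k = 0 then 0 else tc m (k-1) + (real k)^2 * tc m k)"

lemma tc_zero: "k = 0 \<or> k > Suc m \<Longrightarrow> tc m k = 0"
  by (induction m arbitrary: k) auto

lemma cstep2: "k \<ge> 1 \<Longrightarrow> y^2 * cfact y (2*k) = cfact y (2*Suc k) + (real k)^2 * cfact y (2*k)"
proof -
  assume "k \<ge> 1"
  then obtain L where L: "2*k = Suc L" by (cases k) auto
  have "2 * Suc k = Suc L + 2" using L by simp
  moreover have "real (Suc L) = 2 * real k" using L by (metis of_nat_mult of_nat_numeral)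
  then have "(real (Suc L))^2/4 = (real k)^2" by (simp add: power2_eq_square)
  ultimately show ?thesis using cstep[of y L] L by simp
qed

lemma tc_exp: "y^(2*Suc m) = (\<Sum>k=1..Suc m. tc m k * cfact y (2*k))"
proof (induction m)
  case 0 then show ?case by (simp add: cfact_def lfact_def power2_eq_square)
next
  case (Suc m)
  define E where "E k = cfact y (2*k)" for k
  have "y^(2*Suc (Suc m)) = y^2 * y^(2*Suc m)" by (simp add: power_add[symmetric])
  also have "... = (\<Sum>k=1..Suc m. tc m k * (y^2 * E k))"
    unfolding Suc E_def by (simp add: sum_distrib_left algebra_simps)
  also have "... = (\<Sum>k=1..Suc m. tc m k * E (Suc k)) + (\<Sum>k=1..Suc m. (real k)^2 * tc m k * E k)"
    unfolding sum.distrib[symmetric]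
  proof (rule sum.cong[OF refl])
    fix k assume "k \<in> {1..Suc m}"
    then have "y^2 * E k = E (Suc k) + (real k)^2 * E k" unfolding E_def using cstep2[of k y] by simp
    then show "tc m k * (y^2 * E k) = tc m k * E (Suc k) + (real k)^2 * tc m k * E k"
      by (simp add: algebra_simps)
  qed
  also have "(\<Sum>k=1..Suc m. tc m k * E (Suc k)) = (\<Sum>k=1..Suc (Suc m). tc m (k-1) * E k)"
  proof -
    have "(\<Sum>k=1..Suc (Suc m). tc m (k-1) * E k) = (\<Sum>k=Suc 1..Suc (Suc m). tc m (k-1) * E k)"
      by (subst sum.atLeast_Suc_atMost) (simp_all add: tc_zero)
    also have "... = (\<Sum>k=1..Suc m. tc m k * E (Suc k))"
      by (subst sum.shift_bounds_cl_Suc_ivl) simp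
    finally show ?thesis by simp
  qed
  also have "(\<Sum>k=1..Suc m. (real k)^2 * tc m k * E k) = (\<Sum>k=1..Suc (Suc m). (real k)^2 * tc m k * E k)"
    by (simp add: tc_zero)
  finally show ?case
    by (simp add: E_def sum.distrib[symmetric] algebra_simps)
qed

definition cpoly :: "nat \<Rightarrow> real poly" where
  "cpoly k = [:0,1:] * (\<Prod>i<k-1. [: real k/2 - 1 - real i, 1:])"

lemma poly_cpoly: "poly (cpoly k) y = cfact y k"
  by (simp add: cpoly_def cfact_def lfact_def poly_prod algebra_simps)

lemma cpoly_deg: "k \<ge> 1 \<Longrightarrow> degree (cpoly k) = k \<and> coeff (cpoly k) k = 1"
proof -
  assume k: "k \<ge> 1"
  define Q where "Q = (\<Prod>i<k-1. [: real k/2 - 1 - real i, 1:])"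
  have dQ: "degree Q = k - 1" unfolding Q_def
    by (subst degree_prod_eq_sum_degree) auto
  have lQ: "lead_coeff Q = 1" unfolding Q_def lead_coeff_prod by simp
  have "Q \<noteq> 0" using lQ by auto
  then have d: "degree (cpoly k) = k" unfolding cpoly_def Q_def[symmetric]
    using k dQ by (subst degree_mult_eq) auto
  have "lead_coeff (cpoly k) = 1" unfolding cpoly_def Q_def[symmetric] lead_coeff_mult lQ by simp
  with d show ?thesis by simp
qed

lemma uniq:
  assumes "\<forall>y::real. (\<Sum>k=1..M. c k * cfact y k) = (\<Sum>k=1..M. d k * cfact y k)"
    and "\<forall>k. (k = 0 \<or> k > M) \<longrightarrow> c k = 0" and "\<forall>k. (k = 0 \<or> k > M) \<longrightarrow> d k = 0"
  shows "c = d"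
proof (rule ccontr)
  assume ne: "c \<noteq> d"
  define e where "e k = c k - d k" for k
  define S where "S = {k. e k \<noteq> 0}"
  have SM: "S \<subseteq> {1..M}"
  proof
    fix k assume "k \<in> S"
    then have "c k \<noteq> d k" by (simp add: S_def e_def)
    then have "\<not> (k = 0 \<or> k > M)" using assms(2,3) by metis
    then show "k \<in> {1..M}" by simp
  qed
  have "S \<noteq> {}" using ne by (auto simp: S_def e_def fun_eq_iff)
  moreover have fS: "finite S" using SM finite_subset by blast
  ultimately have KS: "Max S \<in> S" by simp
  define K where "K = Max S"
  have KM: "K \<in> {1..M}" using KS SM K_def by auto
  have above: "k > K \<Longrightarrow> e k = 0" for k using Max_ge[OF fS, of k] by (force simp: S_def K_def)
  define p where "p = (\<Sum>k=1..M. smult (e k) (cpoly k))"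
  have "poly p y = poly 0 y" for y
    using assms(1) unfolding p_def by (simp add: poly_sum poly_cpoly e_def left_diff_distrib sum_subtractf)
  then have "p = 0" using poly_eq_poly_eq_iff by blast
  moreover have "coeff p K = e K"
  proof -
    have "coeff p K = (\<Sum>k\<in>{1..M}. e k * coeff (cpoly k) K)" by (simp add: p_def coeff_sum)
    also have "... = e K * coeff (cpoly K) K + (\<Sum>k\<in>{1..M} - {K}. e k * coeff (cpoly k) K)"
      using KM by (simp add: sum.remove)
    also have "(\<Sum>k\<in>{1..M} - {K}. e k * coeff (cpoly k) K) = 0"
    proof (rule sum.neutral, rule ballI)
      fix k assume k: "k \<in> {1..M} - {K}"
      show "e k * coeff (cpoly k) K = 0"
      proof (cases "k < K")
        case True then show ?thesis using cpoly_deg[of k] k by (simp add: coeff_eq_0)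
      next
        case False then show ?thesis using above[of k] k by simp
      qed
    qed
    finally show ?thesis using cpoly_deg[of K] KM by simp
  qed
  ultimately show False using KS K_def S_def by simp
qed


lemma cfnum_eq:
  assumes "m \<ge> 1"
  shows "cfnum (2*m) = (\<lambda>j. if even j then tc (m-1) (j div 2) else 0)"
proof -
  define cc where "cc = (\<lambda>j. if even j then tc (m-1) (j div 2) else 0)"
  have z: "\<forall>k. (k = 0 \<or> k > 2*m) \<longrightarrow> cc k = 0"
    using assms by (auto simp: cc_def intro!: tc_zero elim!: evenE)
  have ex: "y ^ (2*m) = (\<Sum>k=1..2*m. cc k * cfact y k)" for y
  proof -
    have "y ^ (2*m) = (\<Sum>k=1..m. tc (m-1) k * cfact y (2*k))"
      using tc_exp[of y "m-1"] assms by simp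
    also have "... = (\<Sum>j\<in>(\<lambda>k. 2*k) ` {1..m}. cc j * cfact y j)"
      by (subst sum.reindex) (auto simp: inj_on_def cc_def)
    also have "... = (\<Sum>k=1..2*m. cc k * cfact y k)"
      by (rule sum.mono_neutral_left) (auto simp: cc_def)
    finally show ?thesis .
  qed
  have "cfnum (2*m) = cc"
    unfolding cfnum_def
  proof (rule the_equality)
    show "(\<forall>y::real. y ^ (2*m) = (\<Sum>k=1..2*m. cc k * cfact y k)) \<and> (\<forall>k. (k = 0 \<or> k > 2*m) \<longrightarrow> cc k = 0)"
      using ex z by blast
  next
    fix c assume c: "(\<forall>y::real. y ^ (2*m) = (\<Sum>k=1..2*m. c k * cfact y k)) \<and> (\<forall>k. (k = 0 \<or> k > 2*m) \<longrightarrow> c k = 0)"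
    show "c = cc" by (rule uniq[where M="2*m"]) (use c ex z in auto)
  qed
  then show ?thesis by (simp add: cc_def)
qed

lemma cfact_eval: "b = a + real K/2 - 1 \<Longrightarrow> cfact a K = a * lfact b (K-1)"
  by (simp add: cfact_def)

theorem mainTheorem4:
  fixes m r n :: nat and x :: real
  assumes "m \<ge> 1" and "n \<ge> 1"
  shows "rsum (2*r) (\<lambda>j. (x + real j) ^ (2*m)) n =
    (\<Sum>k=1..m. cfnum (2*m) (2*k) *
       ((x + real n + real r) * lfact (x + real n + real k + 2 * real r - 1) (2*k + 2*r - 1)
          / lfact (real (2*k + 2*r)) (2*r)
        - (\<Sum>i=1..2*r. real ((n + 2*r - i - 1) choose (2*r - i)) *
             ((2*x + real i) * lfact (x + real k + real i - 1) (2*k + i - 1))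
             / (2 * lfact (real (2*k + i)) i))))"
proof -
  have f: "(\<lambda>j. (x + real j) ^ (2*m)) = (\<lambda>j. \<Sum>k\<in>{1..m}. cfnum (2*m) (2*k) * cfact (x + real j) (2*k))"
  proof
    fix j
    show "(x + real j) ^ (2*m) = (\<Sum>k\<in>{1..m}. cfnum (2*m) (2*k) * cfact (x + real j) (2*k))"
      using tc_exp[of "x + real j" "m-1"] assms(1) by (simp add: cfnum_eq[OF assms(1)])
  qed
  show ?thesis
    unfolding f rsum_lin[OF finite_atLeastAtMost]
  proof (rule sum.cong[OF refl])
    fix k assume k: "k \<in> {1..m}"
    define L where "L = 2*k - 1"
    have L: "2*k = Suc L" using k by (simp add: L_def)
    have G': "rsum (2*r) (\<lambda>j. cfact (x + real j) (2*k)) n =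
       cfact (x + real n + real (2*r)/2) (Suc L + 2*r) / lfact (real (Suc L + 2*r)) (2*r)
       - (\<Sum>i=1..2*r. real ((n + 2*r - i - 1) choose (2*r - i)) *
        (cfact (x + real i/2) (Suc L + i) / lfact (real (Suc L + i)) i))"
      unfolding L by (rule G[OF assms(2)])
    have t1: "cfact (x + real n + real (2*r)/2) (Suc L + 2*r) / lfact (real (Suc L + 2*r)) (2*r)
      = (x + real n + real r) * lfact (x + real n + real k + 2 * real r - 1) (2*k + 2*r - 1)
          / lfact (real (2*k + 2*r)) (2*r)"
      unfolding L[symmetric] by (subst cfact_eval[where b="x + real n + real k + 2 * real r - 1"]) auto
    have t2: "real ((n + 2*r - i - 1) choose (2*r - i)) *
        (cfact (x + real i/2) (Suc L + i) / lfact (real (Suc L + i)) i)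
      = real ((n + 2*r - i - 1) choose (2*r - i)) *
             ((2*x + real i) * lfact (x + real k + real i - 1) (2*k + i - 1))
             / (2 * lfact (real (2*k + i)) i)" for i
      unfolding L[symmetric] by (subst cfact_eval[where b="x + real k + real i - 1"]) (auto simp: field_simps)
    show "cfnum (2*m) (2*k) * rsum (2*r) (\<lambda>j. cfact (x + real j) (2*k)) n =
      cfnum (2*m) (2*k) *
       ((x + real n + real r) * lfact (x + real n + real k + 2 * real r - 1) (2*k + 2*r - 1)
          / lfact (real (2*k + 2*r)) (2*r)
        - (\<Sum>i=1..2*r. real ((n + 2*r - i - 1) choose (2*r - i)) *
             ((2*x + real i) * lfact (x + real k + real i - 1) (2*k + i - 1))
             / (2 * lfact (real (2*k + i)) i)))"
      unfolding G' t1 t2 ..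
  qed
qed

end
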